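(* Let $b$ be a character of $\mathcal H_{CK}$ with $b(\bullet)=1$, and let $\tilde b$ be the unique character of $\mathcal H$ with $b=\tilde b\star\delta$. Then $b^{*-1}=\tilde b\star\delta^{*-1}$.
   Context: Let $k$ be a field of characteristic $0$. Rooted trees are finite and non-planar; $\bullet$ denotes the one-vertex tree. $\mathcal H$ is the free commutative $k$-algebra generated by isomorphism classes of rooted trees with at least one edge, with unit identified with $\bullet$; a character is a unital algebra morphism to $k$. A subforest of a rooted tree $t$ is either the trivial subforest $\bullet$ or a nonempty set of pairwise vertex-disjoint subtrees each with at least one edge, identified with the product of its components; $t/s$ is the tree obtained by contracting each component of $s$ to a vertex. $\mathcal H_{CK}$ is the Connes–Kreimer Hopf algebra of rooted forests (free commutative algebra on nonempty rooted trees, unit the empty forest $\mathbf 1$, coproduct $\Delta_{CK}$ by admissible cuts: $\Delta_{CK}(u)=\sum v\otimes w$ over decompositions of the vertex set of $u$ into $V\sqcup W$ with no vertex of $V$ strictly below a vertex of $W$), with convolution $b*c=(b\otimes c)\circ\Delta_{CK}$ and $*$-inverse $b^{*-1}$. $\delta$ is the character of $\mathcal H_{CK}$ with $\delta(\bullet)=1$ and $\delta(t)=0$ for all trees with at least two vertices. $\Phi:\mathcal H_{CK}\to\mathcal H\otimes\mathcal H_{CK}$ is the algebra morphism with $\Phi(\mathbf 1)=\bullet\otimes\mathbf 1$ and $\Phi(t)=\sum_s s\otimes t/s$ over subforests $s$ of $t$ for each nonempty tree $t$; for $\alpha\in\mathcal H^*$, $b\in\mathcal H_{CK}^*$, $\alpha\star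 b=(\alpha\otimes b)\circ\Phi$. (Every character $b$ of $\mathcal H_{CK}$ with $b(\bullet)=1$ is of the form $\tilde b\star\delta$ for a unique character $\tilde b$ of $\mathcal H$.) *)

theory Defs
  imports Main "HOL-Library.Multiset" "HOL-Library.Product_Plus"
begin

text \<open>A non-planar rooted tree is a root together with the multiset of subtrees
  hanging from its children; structural equality is tree isomorphism.\<close>
datatype tree = Node (kids: "tree multiset")

definition leaf :: tree where "leaf = Node {#}"

definition has_edge :: "tree \<Rightarrow> bool" where "has_edge t \<longleftrightarrow> t \<noteq> leaf"

text \<open>Forests (basis of H_CK, and of H) are multisets of trees.\<close>
type_synonym forest = "tree multiset"

definition mtimes :: "'a::comm_monoid_add multiset \<Rightarrow> 'a multiset \<Rightarrow> 'a multiset" where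
  "mtimes A B = sum_mset (image_mset (\<lambda>a. image_mset (\<lambda>b. a + b) B) A)"

text \<open>Independent choices: product over a multiset of multisets of alternatives.\<close>
definition mconv :: "'a::comm_monoid_add multiset multiset \<Rightarrow> 'a multiset" where
  "mconv MM = fold_mset mtimes {#0#} MM"

text \<open>cutsT t lists, with multiplicity, the pairs (forest on V, forest on W) for all
  decompositions of the vertex set into V and W with W downward closed
  (no vertex of V strictly below a vertex of W); W is empty or a tree containing the root.\<close>
primrec cutsT :: "tree \<Rightarrow> (forest \<times> forest) multiset" where
  "cutsT (Node M) =
     add_mset ({#Node M#}, {#})
       (image_mset (\<lambda>(v, w). (v, {#Node w#})) (mconv (image_mset cutsT M)))"

definition cutsF :: "forest \<Rightarrow> (forest \<times> forest) multiset" where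
  "cutsF F = mconv (image_mset cutsT F)"

text \<open>Linear forms on H_CK are given by their values on the basis of forests.\<close>
definition conv :: "(forest \<Rightarrow> 'k::field) \<Rightarrow> (forest \<Rightarrow> 'k) \<Rightarrow> forest \<Rightarrow> 'k" where
  "conv b c F = (\<Sum>(v, w) \<in># cutsF F. b v * c w)"

definition counitCK :: "forest \<Rightarrow> 'k::field" where
  "counitCK F = (if F = {#} then 1 else 0)"

definition conv_inv :: "(forest \<Rightarrow> 'k::field) \<Rightarrow> forest \<Rightarrow> 'k" where
  "conv_inv b = (THE c. conv b c = counitCK \<and> conv c b = counitCK)"

definition CK_character :: "(forest \<Rightarrow> 'k::field) \<Rightarrow> bool" where
  "CK_character b \<longleftrightarrow> b {#} = 1 \<and> (\<forall>F G. b (F + G) = b F * b G)"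

definition delta :: "forest \<Rightarrow> 'k::field" where
  "delta F = (\<Prod>t \<in># F. if t = leaf then 1 else 0)"

text \<open>subfT t enumerates subforests of t, which correspond bijectively to subsets E'
  of the edge set (components of (V,E') with at least one edge are the subtrees).
  Each entry (R, S, Q): R = component of the root, S = the other components
  with at least one edge, Q = the contracted tree t/s.\<close>
definition nontriv :: "tree \<Rightarrow> forest" where
  "nontriv r = (if has_edge r then {#r#} else {#})"

primrec subfT :: "tree \<Rightarrow> (tree \<times> forest \<times> tree) multiset" where
  "subfT (Node M) =
     image_mset (\<lambda>(a, f, q). (Node a, f, Node q))
       (mconv (image_mset (\<lambda>X. sum_mset (image_mset (\<lambda>(r, f, q).
            {# ({#r#}, f, kids q), ({#}, f + nontriv r, {#q#}) #}) X))
         (image_mset subfT M)))"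

text \<open>Phi(t) = sum over subforests s of s (x) t/s, for a nonempty tree t.
  The trivial subforest is the empty multiset (= unit of H = the one-vertex tree).\<close>
definition PhiT :: "tree \<Rightarrow> (forest \<times> forest) multiset" where
  "PhiT t = image_mset (\<lambda>(r, f, q). (f + nontriv r, {#q#})) (subfT t)"

text \<open>Phi extended as algebra morphism; Phi(1) = bullet (x) 1.\<close>
definition PhiF :: "forest \<Rightarrow> (forest \<times> forest) multiset" where
  "PhiF F = mconv (image_mset PhiT F)"

text \<open>Linear forms on H given by values on the monomial basis (multisets of trees
  with at least one edge; the empty multiset is the unit = bullet).\<close>
definition star :: "(forest \<Rightarrow> 'k::field) \<Rightarrow> (forest \<Rightarrow> 'k) \<Rightarrow> forest \<Rightarrow> 'k" where
  "star \<alpha> b F = (\<Sum>(s, q) \<in># PhiF F. \<alpha> s * b q)"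

definition H_character :: "(forest \<Rightarrow> 'k::field) \<Rightarrow> bool" where
  "H_character \<alpha> \<longleftrightarrow> \<alpha> {#} = 1 \<and>
     (\<forall>F G. (\<forall>t \<in># F + G. has_edge t) \<longrightarrow> \<alpha> (F + G) = \<alpha> F * \<alpha> G)"

end

theory Submission imports Defs begin

definition mbind :: "'a multiset \<Rightarrow> ('a \<Rightarrow> 'b multiset) \<Rightarrow> 'b multiset" where
  "mbind A f = (\<Sum>x\<in>#A. f x)"

lemma mbind_empty[simp]: "mbind {#} f = {#}" by (simp add: mbind_def)
lemma mbind_add_mset[simp]: "mbind (add_mset x A) f = f x + mbind A f" by (simp add: mbind_def)
lemma mbind_union[simp]: "mbind (A + B) f = mbind A f + mbind B f" by (simp add: mbind_def)
lemma mbind_assoc: "mbind (mbind A f) g = mbind A (\<lambda>x. mbind (f x) g)"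
  by (induction A) auto
lemma mbind_swap: "mbind A (\<lambda>a. mbind B (\<lambda>b. f a b)) = mbind B (\<lambda>b. mbind A (\<lambda>a. f a b))"
  unfolding mbind_def by (rule sum_mset.swap)
lemma mbind_plus: "mbind A (\<lambda>x. f x + g x) = mbind A f + mbind A g"
  by (induction A) auto
lemma mbind_ret: "mbind A (\<lambda>x. {#g x#}) = image_mset g A"
  by (simp add: mbind_def)
lemma mbind_zero: "mbind A (\<lambda>x. {#}) = {#}"
  by (induction A) auto
lemma image_mbind: "image_mset g (mbind A f) = mbind A (\<lambda>x. image_mset g (f x))"
  by (induction A) auto
lemma mbind_image: "mbind (image_mset g A) f = mbind A (\<lambda>x. f (g x))"
  by (induction A) auto
lemma sum_mbind: "(\<Sum>x\<in>#mbind A f. \<phi> x) = (\<Sum>a\<in>#A. \<Sum>x\<in>#f a. \<phi> x)"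
  by (induction A) auto
lemma mbind_cong: "(\<And>x. x \<in># A \<Longrightarrow> f x = g x) \<Longrightarrow> mbind A f = mbind A g"
  unfolding mbind_def by (metis image_mset_cong)
lemma image_as_mbind: "image_mset g A = mbind A (\<lambda>x. {#g x#})"
  by (simp add: mbind_ret)

lemma mtimes_mbind: "mtimes A B = mbind A (\<lambda>a. mbind B (\<lambda>b. {#a + b#}))"
  by (simp add: mtimes_def mbind_def)

lemma mtimes_comm: "mtimes A B = mtimes B (A :: 'a::comm_monoid_add multiset)"
  unfolding mtimes_mbind by (subst mbind_swap) (simp add: add.commute)

lemma mtimes_assoc: "mtimes (mtimes A B) C = mtimes A (mtimes B (C :: 'a::comm_monoid_add multiset))"
  unfolding mtimes_mbind by (simp add: mbind_assoc add.assoc)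

lemma image_plus0[simp]: "image_mset ((+) 0) A = (A::'a::comm_monoid_add multiset)"
  by (induction A) auto

lemma mtimes_unit[simp]: "mtimes {#0#} A = A" "mtimes A {#0#} = A"
  unfolding mtimes_mbind by (simp_all add: mbind_ret)

lemma mtimes_empty[simp]: "mtimes {#} A = {#}" "mtimes A {#} = {#}"
  unfolding mtimes_mbind by (simp_all add: mbind_zero)

lemma mtimes_add_mset: "mtimes (add_mset a A) B = image_mset ((+) a) B + mtimes A B"
  unfolding mtimes_mbind by (simp add: mbind_ret)

lemma mtimes_single: "mtimes {#a#} {#b#} = {#a + b#}"
  unfolding mtimes_mbind by simp

lemma cfc_mtimes: "comp_fun_commute (mtimes :: 'a::comm_monoid_add multiset \<Rightarrow> _)"
proof
  fix x y :: "'a multiset"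
  show "mtimes y \<circ> mtimes x = mtimes x \<circ> mtimes y"
  proof
    fix z
    have "mtimes y (mtimes x z) = mtimes (mtimes y x) z" by (simp add: mtimes_assoc)
    also have "\<dots> = mtimes (mtimes x y) z" by (simp add: mtimes_comm[of x y])
    also have "\<dots> = mtimes x (mtimes y z)" by (simp add: mtimes_assoc)
    finally show "(mtimes y \<circ> mtimes x) z = (mtimes x \<circ> mtimes y) z" by simp
  qed
qed

lemma mconv_empty[simp]: "mconv {#} = {#0#}" by (simp add: mconv_def)
lemma mconv_add_mset[simp]: "mconv (add_mset X XS) = mtimes X (mconv XS)"
  by (simp add: mconv_def comp_fun_commute.fold_mset_add_mset[OF cfc_mtimes])
lemma mconv_union[simp]: "mconv (XS + YS) = mtimes (mconv XS) (mconv YS)"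
  by (induction XS) (auto simp: mtimes_assoc)
lemma mconv_single[simp]: "mconv {#X#} = X"
  by simp

lemma mtimes_unit2[simp]: "mtimes A {#(0,0)#} = A" "mtimes {#(0,0)#} A = A"
  using mtimes_unit[of A] by (simp_all add: zero_prod_def)
lemma mtimes_unit3[simp]: "mtimes A {#(0,0,0)#} = A" "mtimes {#(0,0,0)#} A = A"
  using mtimes_unit[of A] by (simp_all add: zero_prod_def)

definition mult :: "('a::comm_monoid_add \<Rightarrow> 'b::comm_monoid_add multiset) \<Rightarrow> bool" where
  "mult h \<longleftrightarrow> h 0 = {#0#} \<and> (\<forall>x y. h (x + y) = mtimes (h x) (h y))"

lemma mbind_mtimes:
  assumes "mult k" shows "mbind (mtimes A B) k = mtimes (mbind A k) (mbind B k)"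
proof -
  have "mbind (mtimes A B) k = mbind A (\<lambda>a. mbind B (\<lambda>b. mtimes (k a) (k b)))"
    using assms unfolding mult_def by (simp add: mtimes_mbind mbind_assoc)
  also have "\<dots> = mtimes (mbind A k) (mbind B k)"
    unfolding mtimes_mbind mbind_assoc
    by (rule mbind_cong, subst mbind_swap, rule refl)
  finally show ?thesis .
qed

lemma mbind_mconv:
  assumes "mult k" shows "mbind (mconv XS) k = mconv (image_mset (\<lambda>X. mbind X k) XS)"
  using assms by (induction XS) (auto simp: mbind_mtimes mult_def)

lemma mult_bind: "mult h \<Longrightarrow> mult k \<Longrightarrow> mult (\<lambda>x. mbind (h x) k)"
  unfolding mult_def by (auto simp: mbind_mtimes[unfolded mult_def])

lemma mult_ret: "L 0 = 0 \<Longrightarrow> (\<And>x y. L (x + y) = L x + L y) \<Longrightarrow> mult (\<lambda>x. {#L x#})"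
  unfolding mult_def by (simp add: mtimes_single)

lemma mult_comp: "mult h \<Longrightarrow> L 0 = 0 \<Longrightarrow> (\<And>x y. L (x + y) = L x + L y) \<Longrightarrow> mult (\<lambda>x. h (L x))"
  unfolding mult_def by simp

lemma mult_mconv: "mult (\<lambda>F. mconv (image_mset g F))"
  unfolding mult_def by simp

lemma mult_pair: "mult h1 \<Longrightarrow> mult h2 \<Longrightarrow>
   mult (\<lambda>x. mbind (h1 x) (\<lambda>a. mbind (h2 x) (\<lambda>b. {#(a, b)#})))"
  unfolding mult_def
  apply (auto simp: mtimes_mbind mbind_assoc zero_prod_def)
  apply (rule mbind_cong)
  apply (rule mbind_swap)
  done


lemma mult_image: "mult h \<Longrightarrow> L 0 = 0 \<Longrightarrow> (\<And>x y. L (x + y) = L x + L y) \<Longrightarrow>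
   mult (\<lambda>x. image_mset L (h x))"
  using mult_bind[OF _ mult_ret[of L]] by (simp add: image_as_mbind)

lemma mult_single: "mult (\<lambda>x. {#x#})"
  using mult_ret[of "\<lambda>x. x"] by simp

lemma cutsF_empty[simp]: "cutsF {#} = {#({#},{#})#}"
  by (simp add: cutsF_def zero_prod_def)
lemma cutsF_add_mset[simp]: "cutsF (add_mset t F) = mtimes (cutsT t) (cutsF F)"
  by (simp add: cutsF_def)
lemma cutsF_union[simp]: "cutsF (F + G) = mtimes (cutsF F) (cutsF G)"
  by (simp add: cutsF_def)
lemma cutsF_single[simp]: "cutsF {#t#} = cutsT t"
  by (simp add: cutsF_def)
lemma cutsT_eq: "cutsT t = add_mset ({#t#},{#}) (image_mset (\<lambda>(v,w). (v,{#Node w#})) (cutsF (kids t)))"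
  by (cases t) (simp add: cutsF_def)

lemma PhiF_empty[simp]: "PhiF {#} = {#({#},{#})#}"
  by (simp add: PhiF_def zero_prod_def)
lemma PhiF_add_mset[simp]: "PhiF (add_mset t F) = mtimes (PhiT t) (PhiF F)"
  by (simp add: PhiF_def)
lemma PhiF_union[simp]: "PhiF (F + G) = mtimes (PhiF F) (PhiF G)"
  by (simp add: PhiF_def)
lemma PhiF_single[simp]: "PhiF {#t#} = PhiT t"
  by (simp add: PhiF_def)

definition Xc :: "tree \<Rightarrow> (forest \<times> forest \<times> forest) multiset" where
  "Xc c = mbind (subfT c) (\<lambda>(r,f,q). {#({#r#}, f, kids q), ({#}, f + nontriv r, {#q#})#})"

lemma subfT_eq: "subfT (Node M) = image_mset (\<lambda>(a,f,q). (Node a, f, Node q)) (mconv (image_mset Xc M))"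
  by (simp add: Xc_def[abs_def] mbind_def image_mset.compositionality o_def)

declare subfT.simps[simp del]

lemma mult_cutsF: "mult cutsF"
  unfolding mult_def by (simp add: zero_prod_def cutsF_def)
lemma mult_PhiF: "mult PhiF"
  unfolding mult_def by (simp add: zero_prod_def PhiF_def)


definition H1 :: "forest \<times> forest \<times> forest \<Rightarrow> (forest \<times> forest \<times> forest \<times> forest) multiset" where
  "H1 = (\<lambda>(a,f,q). image_mset (\<lambda>(v,w). (a,f,v,w)) (cutsF q))"

definition H2 :: "forest \<times> forest \<Rightarrow> (forest \<times> forest \<times> forest \<times> forest) multiset" where
  "H2 = (\<lambda>(v,wk). mbind (PhiF v) (\<lambda>(s1,q1). image_mset (\<lambda>(a,f,q). (a, s1+f, q1, q)) (mconv (image_mset Xc wk))))"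

lemma mult_H1: "mult H1"
proof -
  have e: "H1 = (\<lambda>x. image_mset (\<lambda>((a,f),(v,w)). (a,f,v,w))
     (mbind ({#(fst x, fst (snd x))#}) (\<lambda>a. mbind (cutsF (snd (snd x))) (\<lambda>b. {#(a, b)#}))))"
    by (auto simp: fun_eq_iff H1_def image_mbind mbind_ret image_mset.compositionality o_def case_prod_unfold)
  show ?thesis unfolding e
    apply (rule mult_image)
      apply (rule mult_pair)
       apply (rule mult_ret)
        apply (simp_all add: zero_prod_def)
     apply (rule mult_comp[OF mult_cutsF])
      apply (auto simp: zero_prod_def split_beta)
    done
qed

lemma mult_H2: "mult H2"
proof -
  have e: "H2 = (\<lambda>x. image_mset (\<lambda>((s1,q1),(a,f,q)). (a, s1+f, q1, q))
     (mbind (PhiF (fst x)) (\<lambda>a. mbind (mconv (image_mset Xc (snd x))) (\<lambda>b. {#(a, b)#}))))"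
    by (auto simp: fun_eq_iff H2_def image_mbind mbind_ret image_mset.compositionality o_def case_prod_unfold)
  show ?thesis unfolding e
    apply (rule mult_image)
      apply (rule mult_pair)
       apply (rule mult_comp[OF mult_PhiF])
        apply (simp_all add: zero_prod_def)
     apply (rule mult_comp[OF mult_mconv])
      apply (auto simp: zero_prod_def split_beta add_ac)
    done
qed


definition AA :: "tree \<Rightarrow> (tree \<times> forest \<times> forest \<times> tree) multiset" where
  "AA t = mbind (subfT t) (\<lambda>(R,S,Q). image_mset (\<lambda>(v,w). (R,S,v,Node w)) (cutsF (kids Q)))"
definition BB :: "tree \<Rightarrow> (tree \<times> forest \<times> forest \<times> tree) multiset" where
  "BB t = mbind (cutsF (kids t)) (\<lambda>(v,wk). mbind (PhiF v) (\<lambda>(s1,q1).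
      image_mset (\<lambda>(R,S2,Q2). (R, s1+S2, q1, Q2)) (subfT (Node wk))))"

definition K1 :: "tree \<times> forest \<times> forest \<times> tree \<Rightarrow> forest \<times> forest \<times> forest \<times> forest" where
  "K1 = (\<lambda>(R,S,v,W). ({#R#},S,v,kids W))"
definition K2 :: "tree \<times> forest \<times> forest \<times> tree \<Rightarrow> forest \<times> forest \<times> forest \<times> forest" where
  "K2 = (\<lambda>(R,S,v,W). ({#}, S + nontriv R, v, {#W#}))"
definition P0 :: "forest \<times> forest \<Rightarrow> forest \<times> forest \<times> forest \<times> forest" where
  "P0 = (\<lambda>(s,q). ({#},s,q,{#}))"

lemma PL_eq: "mbind (Xc c) H1 = image_mset K1 (AA c) + image_mset P0 (PhiT c) + image_mset K2 (AA c)"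
proof -
  have "mbind (Xc c) H1 = mbind (subfT c) (\<lambda>x. image_mset K1 ((\<lambda>(R,S,Q). image_mset (\<lambda>(v,w). (R,S,v,Node w)) (cutsF (kids Q))) x)
     + {#P0 ((\<lambda>(r,f,q). (f + nontriv r, {#q#})) x)#}
     + image_mset K2 ((\<lambda>(R,S,Q). image_mset (\<lambda>(v,w). (R,S,v,Node w)) (cutsF (kids Q))) x))"
    unfolding Xc_def mbind_assoc
    apply (rule mbind_cong)
    subgoal for x
      by (cases x) (simp add: cutsT_eq H1_def K1_def K2_def P0_def image_mset.compositionality o_def case_prod_unfold add_ac)
    done
  also have "\<dots> = image_mset K1 (AA c) + image_mset P0 (PhiT c) + image_mset K2 (AA c)"
    unfolding AA_def PhiT_def image_mbind mbind_plus image_mset.compositionality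
    by (simp add: mbind_ret o_def)
  finally show ?thesis .
qed


lemma H2_leaf: "H2 ({#c#},{#}) = image_mset P0 (PhiT c)"
  by (simp add: H2_def P0_def zero_prod_def mbind_ret case_prod_unfold)

lemma H2_node: "H2 (v, {#Node w#}) =
   image_mset K1 (mbind (PhiF v) (\<lambda>(s1,q1). image_mset (\<lambda>(R,S2,Q2). (R, s1+S2, q1, Q2)) (subfT (Node w))))
 + image_mset K2 (mbind (PhiF v) (\<lambda>(s1,q1). image_mset (\<lambda>(R,S2,Q2). (R, s1+S2, q1, Q2)) (subfT (Node w))))"
  unfolding H2_def image_mbind mbind_plus[symmetric]
  apply simp
  apply (rule mbind_cong)
  subgoal for x
    apply (cases x)
    apply (simp add: Xc_def image_mbind)
    apply (simp only: image_as_mbind[of _ "subfT (Node w)"])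
    apply (simp only: image_mbind mbind_plus[symmetric])
    apply (rule mbind_cong)
    subgoal
      by (simp add: K1_def K2_def case_prod_unfold add_ac)
    done
  done

lemma PR_eq: "mbind (cutsT c) H2 = image_mset P0 (PhiT c) + image_mset K1 (BB c) + image_mset K2 (BB c)"
proof -
  have "mbind (cutsT c) H2 = image_mset P0 (PhiT c) + mbind (cutsF (kids c)) (\<lambda>x. H2 (fst x, {#Node (snd x)#}))"
    by (subst cutsT_eq) (simp add: H2_leaf mbind_image case_prod_unfold)
  also have "\<dots> = image_mset P0 (PhiT c) + image_mset K1 (BB c) + image_mset K2 (BB c)"
    unfolding BB_def image_mbind add.assoc mbind_plus[symmetric]
    apply (rule arg_cong[where f = "\<lambda>x. _ + x"])
    apply (rule mbind_cong)
    subgoal for x by (cases x) (simp only: H2_node prod.case fst_conv snd_conv)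
    done
  finally show ?thesis .
qed

lemma AA_BB: "AA t = BB t"
proof (induction t)
  case (Node M)
  define Nd :: "forest \<times> forest \<times> forest \<times> forest \<Rightarrow> tree \<times> forest \<times> forest \<times> tree"
    where "Nd = (\<lambda>(a,f,v,w). (Node a, f, v, Node w))"
  have "AA (Node M) = image_mset Nd (mbind (mconv (image_mset Xc M)) H1)"
    unfolding AA_def subfT_eq mbind_image image_mbind
    apply (rule mbind_cong)
    subgoal for x by (cases x) (simp add: H1_def Nd_def image_mset.compositionality o_def case_prod_unfold)
    done
  also have "\<dots> = image_mset Nd (mconv (image_mset (\<lambda>c. mbind (Xc c) H1) M))"
    by (simp add: mbind_mconv[OF mult_H1] image_mset.compositionality o_def)
  also have "\<dots> = image_mset Nd (mconv (image_mset (\<lambda>c. mbind (cutsT c) H2) M))"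
  proof -
    have "image_mset (\<lambda>c. mbind (Xc c) H1) M = image_mset (\<lambda>c. mbind (cutsT c) H2) M"
      by (rule image_mset_cong) (simp add: PL_eq PR_eq Node.IH add_ac)
    then show ?thesis by simp
  qed
  also have "\<dots> = image_mset Nd (mbind (cutsF M) H2)"
    by (simp add: mbind_mconv[OF mult_H2] image_mset.compositionality o_def cutsF_def)
  also have "\<dots> = BB (Node M)"
    unfolding BB_def subfT_eq image_mbind tree.sel
    by (auto simp: H2_def image_mbind Nd_def image_mset.compositionality o_def case_prod_unfold intro!: mbind_cong)
  finally show ?case .
qed


definition H3 :: "forest \<times> forest \<Rightarrow> (forest \<times> forest \<times> forest) multiset" where
  "H3 = (\<lambda>(s,q). image_mset (\<lambda>(v,w). (s,v,w)) (cutsF q))"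
definition H4 :: "forest \<times> forest \<Rightarrow> (forest \<times> forest \<times> forest) multiset" where
  "H4 = (\<lambda>(v,w). mbind (PhiF v) (\<lambda>(s1,q1). image_mset (\<lambda>(s2,q2). (s1+s2,q1,q2)) (PhiF w)))"

lemma mult_H3: "mult H3"
proof -
  have e: "H3 = (\<lambda>x. image_mset (\<lambda>(s,(v,w)). (s,v,w))
     (mbind ({#fst x#}) (\<lambda>a. mbind (cutsF (snd x)) (\<lambda>b. {#(a, b)#}))))"
    by (auto simp: fun_eq_iff H3_def image_mbind mbind_ret image_mset.compositionality o_def case_prod_unfold)
  show ?thesis unfolding e
    apply (rule mult_image)
      apply (rule mult_pair)
       apply (rule mult_ret)
        apply (simp_all add: zero_prod_def)
     apply (rule mult_comp[OF mult_cutsF])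
      apply (auto simp: zero_prod_def case_prod_unfold)
    done
qed

lemma mult_H4: "mult H4"
proof -
  have e: "H4 = (\<lambda>x. image_mset (\<lambda>((s1,q1),(s2,q2)). (s1+s2,q1,q2))
     (mbind (PhiF (fst x)) (\<lambda>a. mbind (PhiF (snd x)) (\<lambda>b. {#(a, b)#}))))"
    by (auto simp: fun_eq_iff H4_def image_mbind mbind_ret image_mset.compositionality o_def case_prod_unfold)
  show ?thesis unfolding e
    apply (rule mult_image)
      apply (rule mult_pair)
       apply (rule mult_comp[OF mult_PhiF])
        apply (simp_all add: zero_prod_def)
     apply (rule mult_comp[OF mult_PhiF])
      apply (auto simp: zero_prod_def case_prod_unfold add_ac)
    done
qed

definition P3 :: "forest \<times> forest \<Rightarrow> forest \<times> forest \<times> forest" where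
  "P3 = (\<lambda>(s,q). (s,q,{#}))"
definition K3 :: "tree \<times> forest \<times> forest \<times> tree \<Rightarrow> forest \<times> forest \<times> forest" where
  "K3 = (\<lambda>(R,S,v,W). (S + nontriv R, v, {#W#}))"

lemma LT_eq: "mbind (PhiT t) H3 = image_mset P3 (PhiT t) + image_mset K3 (AA t)"
proof -
  have "mbind (PhiT t) H3 = mbind (subfT t) (\<lambda>x. {#P3 ((\<lambda>(r,f,q). (f + nontriv r, {#q#})) x)#} +
      image_mset K3 ((\<lambda>(R,S,Q). image_mset (\<lambda>(v,w). (R,S,v,Node w)) (cutsF (kids Q))) x))"
    unfolding PhiT_def mbind_image
    apply (rule mbind_cong)
    subgoal for x
      by (cases x) (simp add: cutsT_eq H3_def K3_def P3_def image_mset.compositionality o_def case_prod_unfold add_ac)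
    done
  also have "\<dots> = image_mset P3 (PhiT t) + image_mset K3 (AA t)"
    unfolding AA_def PhiT_def image_mbind mbind_plus image_mset.compositionality
    by (simp add: mbind_ret o_def)
  finally show ?thesis .
qed

lemma H4_leaf: "H4 ({#c#},{#}) = image_mset P3 (PhiT c)"
  by (simp add: H4_def P3_def zero_prod_def mbind_ret case_prod_unfold)

lemma H4_node: "H4 (v, {#Node w#}) =
   image_mset K3 (mbind (PhiF v) (\<lambda>(s1,q1). image_mset (\<lambda>(R,S2,Q2). (R, s1+S2, q1, Q2)) (subfT (Node w))))"
  unfolding H4_def image_mbind
  apply simp
  apply (rule mbind_cong)
  subgoal
    by (simp add: PhiT_def K3_def image_mset.compositionality o_def case_prod_unfold add_ac)
  done

lemma RT_eq: "mbind (cutsT c) H4 = image_mset P3 (PhiT c) + image_mset K3 (BB c)"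
proof -
  have "mbind (cutsT c) H4 = image_mset P3 (PhiT c) + mbind (cutsF (kids c)) (\<lambda>x. H4 (fst x, {#Node (snd x)#}))"
    by (subst cutsT_eq) (simp add: H4_leaf mbind_image case_prod_unfold)
  also have "\<dots> = image_mset P3 (PhiT c) + image_mset K3 (BB c)"
    unfolding BB_def image_mbind
    apply (rule arg_cong[where f = "\<lambda>x. _ + x"])
    apply (rule mbind_cong)
    subgoal for x by (cases x) (simp only: H4_node prod.case fst_conv snd_conv)
    done
  finally show ?thesis .
qed

lemma forest_identity:
  "mbind (PhiF F) H3 = mbind (cutsF F) H4"
proof -
  have "mbind (PhiF F) H3 = mconv (image_mset (\<lambda>t. mbind (PhiT t) H3) F)"
    by (simp add: PhiF_def mbind_mconv[OF mult_H3] image_mset.compositionality o_def)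
  also have "\<dots> = mconv (image_mset (\<lambda>t. mbind (cutsT t) H4) F)"
    by (simp add: LT_eq RT_eq AA_BB)
  also have "\<dots> = mbind (cutsF F) H4"
    by (simp add: cutsF_def mbind_mconv[OF mult_H4] image_mset.compositionality o_def)
  finally show ?thesis .
qed


lemma in_mtimes: "x \<in># mtimes A B \<Longrightarrow> \<exists>a b. a \<in># A \<and> b \<in># B \<and> x = a + b"
  unfolding mtimes_def by auto

lemma mconv_closed:
  assumes "\<And>X x. X \<in># XS \<Longrightarrow> x \<in># X \<Longrightarrow> P x" "P 0" "\<And>x y. P x \<Longrightarrow> P y \<Longrightarrow> P (x + y)"
  shows "x \<in># mconv XS \<Longrightarrow> P x"
  using assms(1)
proof (induction XS arbitrary: x)
  case empty then show ?case using assms(2) by simp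
next
  case (add X XS)
  from add.prems(1) obtain a b where "a \<in># X" "b \<in># mconv XS" "x = a + b"
    using in_mtimes by fastforce
  then show ?case using add.IH[of b] add.prems(2) assms(3) by auto
qed

lemma subfT_free: "(r,f,q) \<in># subfT t \<Longrightarrow> \<forall>x\<in>#f. has_edge x"
proof (induction t arbitrary: r f q)
  case (Node M)
  from Node.prems obtain a q' where m: "(a,f,q') \<in># mconv (image_mset Xc M)"
    unfolding subfT_eq by auto
  have "(\<lambda>(a,f,q). \<forall>x\<in>#f. has_edge x) (a,f,q')"
  proof (rule mconv_closed[OF _ _ _ m])
    fix X y assume X: "X \<in># image_mset Xc M" and y: "y \<in># X"
    then obtain c where c: "c \<in># M" "X = Xc c" by auto
    from y c(2) obtain r1 f1 q1 where "(r1,f1,q1) \<in># subfT c"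
      "y = ({#r1#}, f1, kids q1) \<or> y = ({#}, f1 + nontriv r1, {#q1#})"
      unfolding Xc_def mbind_def by auto
    with Node.IH[OF c(1)] show "(\<lambda>(a,f,q). \<forall>x\<in>#f. has_edge x) y"
      by (auto simp: nontriv_def split: if_splits)
  qed (auto simp: zero_prod_def)
  then show ?case by simp
qed

lemma PhiT_free: "(s,q) \<in># PhiT t \<Longrightarrow> \<forall>x\<in>#s. has_edge x"
  unfolding PhiT_def using subfT_free by (fastforce simp: nontriv_def split: if_splits)

lemma PhiF_free: "(s,q) \<in># PhiF F \<Longrightarrow> \<forall>x\<in>#s. has_edge x"
proof -
  assume m: "(s,q) \<in># PhiF F"
  have "(\<lambda>(s,q). \<forall>x\<in>#s. has_edge x) (s,q)"
    by (rule mconv_closed[OF _ _ _ m[unfolded PhiF_def]]) (auto simp: zero_prod_def dest: PhiT_free)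
  then show ?thesis by simp
qed

lemma PhiT_snd: "p \<in># PhiT t \<Longrightarrow> snd p \<noteq> {#}"
  unfolding PhiT_def by auto

lemma PhiF_snd: "p \<in># PhiF F \<Longrightarrow> F \<noteq> {#} \<Longrightarrow> snd p \<noteq> {#}"
proof (induction F arbitrary: p)
  case empty then show ?case by simp
next
  case (add t F)
  then obtain a b where "a \<in># PhiT t" "p = a + b" using in_mtimes by fastforce
  then show ?case using PhiT_snd by fastforce
qed

primrec nv :: "tree \<Rightarrow> nat" where
  "nv (Node M) = Suc (sum_mset (image_mset nv M))"

definition nvF :: "forest \<Rightarrow> nat" where "nvF F = (\<Sum>t\<in>#F. nv t)"

lemma nvF_simps[simp]: "nvF {#} = 0" "nvF (add_mset t F) = nv t + nvF F" "nvF (F + G) = nvF F + nvF G"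
  by (simp_all add: nvF_def)

lemma nv_pos: "nv t > 0" by (cases t) auto

lemma nvF_pos: "F \<noteq> {#} \<Longrightarrow> nvF F > 0"
  by (cases F) (auto simp: nv_pos)

lemma cutsF_nv_aux:
  assumes "\<And>t v w. t \<in># F \<Longrightarrow> (v,w) \<in># cutsT t \<Longrightarrow> nvF v + nvF w = nv t"
  shows "(v,w) \<in># cutsF F \<Longrightarrow> nvF v + nvF w = nvF F"
  using assms
proof (induction F arbitrary: v w)
  case empty then show ?case by simp
next
  case (add t F)
  from add.prems(1) have "(v,w) \<in># mtimes (cutsT t) (cutsF F)" by simp
  then obtain a b where ab: "a \<in># cutsT t" "b \<in># cutsF F" "(v,w) = a + b" 
    using in_mtimes by blast
  obtain a1 a2 where a: "a = (a1,a2)" by (cases a)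
  obtain b1 b2 where b: "b = (b1,b2)" by (cases b)
  have 1: "nvF a1 + nvF a2 = nv t" using add.prems(2)[of t a1 a2] ab(1) a by simp
  have 2: "nvF b1 + nvF b2 = nvF F" using add.IH[of b1 b2] add.prems(2) ab(2) b by simp
  from ab(3) a b have "v = a1 + b1" "w = a2 + b2" by simp_all
  with 1 2 show ?case by simp
qed

lemma cutsT_nv: "(v,w) \<in># cutsT t \<Longrightarrow> nvF v + nvF w = nv t"
proof (induction t arbitrary: v w)
  case (Node M)
  show ?case
  proof (cases "(v,w) = ({#Node M#},{#})")
    case True then show ?thesis by simp
  next
    case False
    with Node.prems obtain w' where "(v,w') \<in># cutsF M" "w = {#Node w'#}"
      by (subst (asm) cutsT_eq) auto
    with cutsF_nv_aux[of M v w'] Node.IH show ?thesis by (simp add: nvF_def)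
  qed
qed

lemma cutsF_nv: "(v,w) \<in># cutsF F \<Longrightarrow> nvF v + nvF w = nvF F"
  using cutsF_nv_aux cutsT_nv by blast


lemma filter_mtimes:
  assumes "\<And>a b. P (a + b) \<longleftrightarrow> P a \<and> P b"
  shows "filter_mset P (mtimes A B) = mtimes (filter_mset P A) (filter_mset P B)"
proof (induction A)
  case empty then show ?case by simp
next
  case (add x A)
  have "filter_mset P (image_mset ((+) x) B) = (if P x then image_mset ((+) x) (filter_mset P B) else {#})"
    by (induction B) (auto simp: assms)
  then show ?case using add by (simp add: mtimes_add_mset)
qed

lemma filter_snd_cutsT: "filter_mset (\<lambda>p. snd p = {#}) (cutsT t) = {#({#t#},{#})#}"
  by (subst cutsT_eq) (simp add: image_mset_filter_mset_swap[symmetric] case_prod_unfold)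

lemma filter_snd_cutsF: "filter_mset (\<lambda>p. snd p = {#}) (cutsF F) = {#(F,{#})#}"
proof (induction F)
  case empty then show ?case by simp
next
  case (add t F)
  then show ?case by (simp add: filter_mtimes filter_snd_cutsT mtimes_single)
qed

lemma filter_fst_cutsF_aux:
  assumes "\<And>t. t \<in># F \<Longrightarrow> filter_mset (\<lambda>p. fst p = {#}) (cutsT t) = {#({#},{#t#})#}"
  shows "filter_mset (\<lambda>p. fst p = {#}) (cutsF F) = {#({#},F)#}"
  using assms
proof (induction F)
  case empty then show ?case by simp
next
  case (add t F)
  then show ?case by (simp add: filter_mtimes mtimes_single)
qed

lemma filter_fst_cutsT: "filter_mset (\<lambda>p. fst p = {#}) (cutsT t) = {#({#},{#t#})#}"
proof (induction t)
  case (Node M)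
  have "filter_mset (\<lambda>p. fst p = {#}) (cutsF M) = {#({#},M)#}"
    by (rule filter_fst_cutsF_aux) (use Node.IH in auto)
  then have "filter_mset (\<lambda>p. fst p = {#}) (image_mset (\<lambda>(v, w). (v, {#Node w#})) (cutsF M)) = {#({#},{#Node M#})#}"
    by (simp add: image_mset_filter_mset_swap[symmetric] case_prod_unfold)
  then show ?case by (subst cutsT_eq) simp
qed

lemma filter_fst_cutsF: "filter_mset (\<lambda>p. fst p = {#}) (cutsF F) = {#({#},F)#}"
  by (rule filter_fst_cutsF_aux) (simp add: filter_fst_cutsT)


section \<open>Linear forms\<close>

lemma sum_mset_cong': "(\<And>x. x \<in># A \<Longrightarrow> f x = g x) \<Longrightarrow> (\<Sum>x\<in>#A. f x) = (\<Sum>x\<in>#A. g x)"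
  by (metis image_mset_cong)

lemma sum_mtimes:
  fixes \<phi> :: "'a::comm_monoid_add \<Rightarrow> 'k::comm_semiring_1"
  assumes "\<And>x y. \<phi> (x + y) = \<phi> x * \<phi> y"
  shows "(\<Sum>x\<in>#mtimes A B. \<phi> x) = (\<Sum>x\<in>#A. \<phi> x) * (\<Sum>x\<in>#B. \<phi> x)"
  unfolding mtimes_mbind sum_mbind by (simp add: assms sum_mset_distrib_right) (simp add: sum_mset_distrib_left)

lemma sum_mset_neg: "(\<Sum>x\<in>#M. - f x) = - (\<Sum>x\<in>#M. f x :: 'a::ab_group_add)"
  by (induction M) auto

lemma sum_mset_partition: "(\<Sum>x\<in>#M. h x) = (\<Sum>x\<in>#filter_mset P M. h x) + (\<Sum>x\<in>#filter_mset (\<lambda>x. \<not> P x) M. h x)"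
  by (induction M) (auto simp: add_ac)

lemma conv_alt: "conv b c F = (\<Sum>p\<in>#cutsF F. b (fst p) * c (snd p))"
  by (simp add: conv_def case_prod_unfold)

lemma conv_mult:
  fixes f g :: "forest \<Rightarrow> 'k::field"
  assumes "\<And>A B. f (A + B) = f A * f B" "\<And>A B. g (A + B) = g A * g B"
  shows "conv f g (A + B) = conv f g A * conv f g B"
  unfolding conv_alt cutsF_union
  by (rule sum_mtimes) (simp add: assms)

lemma conv_counit_right: "conv f counitCK F = f F"
proof -
  have "conv f counitCK F = (\<Sum>p\<in>#filter_mset (\<lambda>p. snd p = {#}) (cutsF F). f (fst p) * counitCK (snd p))
      + (\<Sum>p\<in>#filter_mset (\<lambda>p. \<not> snd p = {#}) (cutsF F). f (fst p) * counitCK (snd p))"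
    unfolding conv_alt by (rule sum_mset_partition)
  also have "\<dots> = f F"
    by (simp add: filter_snd_cutsF counitCK_def sum_mset.neutral)
  finally show ?thesis .
qed

lemma conv_left_unique:
  fixes f c c' :: "forest \<Rightarrow> 'k::field"
  assumes f0: "f {#} = 1" and eq: "conv f c = conv f c'"
  shows "c = c'"
proof
  fix F
  show "c F = c' F"
  proof (induction "nvF F" arbitrary: F rule: less_induct)
    case less
    let ?P = "\<lambda>p::forest\<times>forest. fst p = {#}"
    have split: "\<And>h. conv f h F = h F + (\<Sum>p\<in>#filter_mset (\<lambda>p. \<not> ?P p) (cutsF F). f (fst p) * h (snd p))"
    proof -
      fix h :: "forest \<Rightarrow> 'k"
      show "conv f h F = h F + (\<Sum>p\<in>#filter_mset (\<lambda>p. \<not> ?P p) (cutsF F). f (fst p) * h (snd p))"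
        unfolding conv_alt
        by (subst sum_mset_partition[where P = ?P]) (simp add: filter_fst_cutsF f0)
    qed
    have "(\<Sum>p\<in>#filter_mset (\<lambda>p. \<not> ?P p) (cutsF F). f (fst p) * c (snd p))
        = (\<Sum>p\<in>#filter_mset (\<lambda>p. \<not> ?P p) (cutsF F). f (fst p) * c' (snd p))"
    proof (rule sum_mset_cong')
      fix p assume p: "p \<in># filter_mset (\<lambda>p. \<not> ?P p) (cutsF F)"
      obtain v w where vw: "p = (v,w)" by (cases p)
      from p vw have "(v,w) \<in># cutsF F" "v \<noteq> {#}" by auto
      then have "nvF w < nvF F" using cutsF_nv[of v w F] nvF_pos[of v] by simp
      then show "f (fst p) * c (snd p) = f (fst p) * c' (snd p)" using less vw by simp
    qed
    with split[of c] split[of c'] eq show ?case by simp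
  qed
qed

lemma counit_mult: "counitCK (A + B) = (counitCK A * counitCK B :: 'k::field)"
  by (simp add: counitCK_def)
lemma delta_mult: "delta (A + B) = (delta A * delta B :: 'k::field)"
  by (simp add: delta_def)

definition dinv :: "forest \<Rightarrow> 'k::field" where "dinv F = (-1) ^ nvF F"

lemma dinv_mult: "dinv (A + B) = (dinv A * dinv B :: 'k::field)"
  by (simp add: dinv_def power_add)
lemma delta_empty[simp]: "delta {#} = (1::'k::field)" by (simp add: delta_def)
lemma dinv_empty[simp]: "dinv {#} = (1::'k::field)" by (simp add: dinv_def)

lemma conv_forest_aux:
  fixes f g :: "forest \<Rightarrow> 'k::field"
  assumes "\<And>A B. f (A + B) = f A * f B" "\<And>A B. g (A + B) = g A * g B" "f {#} = 1" "g {#} = 1"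
    and "\<And>t. t \<in># F \<Longrightarrow> conv f g {#t#} = 0"
  shows "conv f g F = counitCK F"
  using assms(5)
proof (induction F)
  case empty then show ?case by (simp add: conv_def counitCK_def assms)
next
  case (add t F)
  have "conv f g (add_mset t F) = conv f g {#t#} * conv f g F"
    using conv_mult[OF assms(1,2), of "{#t#}" F] by simp
  then show ?case using add by (simp add: counitCK_def)
qed

lemma dinv_node: "dinv {#Node w#} = - (dinv w :: 'k::field)"
  by (simp add: dinv_def nvF_def)

lemma delta_node: "delta {#Node w#} = (counitCK w :: 'k::field)"
  by (simp add: delta_def counitCK_def leaf_def)

lemma conv_cutsT: "conv f g {#t#} = f {#t#} * g {#} + (\<Sum>p\<in>#cutsF (kids t). f (fst p) * g {#Node (snd p)#})"
  unfolding conv_alt by (subst cutsF_single, subst cutsT_eq) (simp add: case_prod_unfold image_mset.compositionality o_def)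

lemma conv_delta_dinv: "conv delta dinv = (counitCK :: forest \<Rightarrow> 'k::field)"
proof -
  have tree: "conv delta dinv {#t#} = (0::'k)" for t
  proof (induction t)
    case (Node M)
    have "conv delta dinv M = (counitCK M :: 'k)"
      by (rule conv_forest_aux[OF delta_mult dinv_mult delta_empty dinv_empty Node.IH])
    then have "(\<Sum>p\<in>#cutsF M. delta (fst p) * dinv {#Node (snd p)#}) = - (counitCK M :: 'k)"
      by (simp add: dinv_node conv_alt sum_mset_neg)
    then show ?case by (simp add: conv_cutsT delta_node dinv_def)
  qed
  show ?thesis
    by (rule ext, rule conv_forest_aux[OF delta_mult dinv_mult delta_empty dinv_empty tree])
qed


lemma conv_dinv_delta: "conv dinv delta = (counitCK :: forest \<Rightarrow> 'k::field)"
proof -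
  have tree: "conv dinv delta {#t#} = (0::'k)" for t
  proof -
    have "(\<Sum>p\<in>#cutsF (kids t). dinv (fst p) * delta {#Node (snd p)#}) = (dinv (kids t) :: 'k)"
      using conv_counit_right[of dinv "kids t"] by (simp add: delta_node conv_alt)
    moreover have "dinv {#t#} = - (dinv (kids t) :: 'k)"
      by (cases t) (simp add: dinv_node)
    ultimately show ?thesis by (simp add: conv_cutsT)
  qed
  show ?thesis
    by (rule ext, rule conv_forest_aux[OF dinv_mult delta_mult dinv_empty delta_empty tree])
qed

section \<open>Star\<close>

lemma star_counit:
  assumes "\<alpha> {#} = (1::'k::field)"
  shows "star \<alpha> counitCK = counitCK"
proof
  fix F
  show "star \<alpha> counitCK F = counitCK F"
  proof (cases "F = {#}")
    case True then show ?thesis by (simp add: star_def counitCK_def assms)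
  next
    case False
    have "star \<alpha> counitCK F = (\<Sum>p\<in>#PhiF F. \<alpha> (fst p) * counitCK (snd p))"
      by (simp add: star_def case_prod_unfold)
    also have "\<dots> = 0"
      by (rule sum_mset.neutral) (use PhiF_snd[OF _ False] in \<open>auto simp: counitCK_def\<close>)
    finally show ?thesis using False by (simp add: counitCK_def)
  qed
qed

lemma star_conv:
  fixes \<alpha> b c :: "forest \<Rightarrow> 'k::field"
  assumes am: "\<And>F G. (\<forall>t \<in># F + G. has_edge t) \<Longrightarrow> \<alpha> (F + G) = \<alpha> F * \<alpha> G"
  shows "conv (star \<alpha> b) (star \<alpha> c) = star \<alpha> (conv b c)"
proof
  fix F
  define \<phi> where "\<phi> = (\<lambda>(s,v,w). \<alpha> s * b v * c w)"
  have L: "star \<alpha> (conv b c) F = (\<Sum>x\<in>#mbind (PhiF F) H3. \<phi> x)"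
    unfolding star_def sum_mbind
    apply (rule sum_mset_cong')
    subgoal for p
      by (cases p) (simp add: H3_def conv_def \<phi>_def sum_mset_distrib_left image_mset.compositionality o_def
          case_prod_unfold mult.assoc)
    done
  have R: "conv (star \<alpha> b) (star \<alpha> c) F = (\<Sum>x\<in>#mbind (cutsF F) H4. \<phi> x)"
    unfolding conv_def sum_mbind
    apply (rule sum_mset_cong')
    subgoal for p
    proof (cases p)
      case (Pair v w)
      have "star \<alpha> b v * star \<alpha> c w =
         (\<Sum>p1\<in>#PhiF v. \<Sum>p2\<in>#PhiF w. \<alpha> (fst p1) * b (snd p1) * (\<alpha> (fst p2) * c (snd p2)))"
        by (simp add: star_def case_prod_unfold sum_mset_distrib_right) (simp add: sum_mset_distrib_left)
      also have "\<dots> = (\<Sum>p1\<in>#PhiF v. \<Sum>p2\<in>#PhiF w. \<alpha> (fst p1 + fst p2) * b (snd p1) * c (snd p2))"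
      proof (rule sum_mset_cong', rule sum_mset_cong')
        fix p1 p2 assume p1: "p1 \<in># PhiF v" and p2: "p2 \<in># PhiF w"
        have "\<forall>t\<in>#fst p1 + fst p2. has_edge t"
          using PhiF_free[of "fst p1" "snd p1" v] PhiF_free[of "fst p2" "snd p2" w] p1 p2 by auto
        then show "\<alpha> (fst p1) * b (snd p1) * (\<alpha> (fst p2) * c (snd p2)) =
          \<alpha> (fst p1 + fst p2) * b (snd p1) * c (snd p2)"
          using am by (simp add: ac_simps)
      qed
      also have "\<dots> = (\<Sum>x\<in>#H4 (v, w). \<phi> x)"
        by (simp add: H4_def \<phi>_def sum_mbind image_mset.compositionality o_def case_prod_unfold)
      finally show ?thesis using Pair by simp
    qed
    done
  show "conv (star \<alpha> b) (star \<alpha> c) F = star \<alpha> (conv b c) F"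
    using L R forest_identity[of F] by simp
qed


lemma conv_inv_eq:
  fixes b c :: "forest \<Rightarrow> 'k::field"
  assumes "b {#} = 1" "conv b c = counitCK" "conv c b = counitCK"
  shows "conv_inv b = c"
  unfolding conv_inv_def
proof (rule the_equality)
  show "conv b c = counitCK \<and> conv c b = counitCK" using assms by simp
next
  fix c' assume "conv b c' = counitCK \<and> conv c' b = counitCK"
  then show "c' = c" using conv_left_unique[of b c' c, OF assms(1)] assms(2) by simp
qed

theorem mainTheorem9:
  fixes b bt :: "forest \<Rightarrow> 'k::field_char_0"
  assumes "CK_character b"
    and "b {#leaf#} = 1"
    and "H_character bt"
    and "b = star bt delta"
  shows "conv_inv b = star bt (conv_inv delta)"
proof -
  have am: "\<And>F G. (\<forall>t\<in>#F+G. has_edge t) \<Longrightarrow> bt (F+G) = bt F * bt G" and bt0: "bt {#} = 1"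
    using assms(3) unfolding H_character_def by blast+
  have d: "conv_inv delta = (dinv :: forest \<Rightarrow> 'k)"
    by (rule conv_inv_eq) (simp_all add: conv_delta_dinv conv_dinv_delta)
  have b0: "b {#} = 1" using assms(1) unfolding CK_character_def by blast
  have "conv_inv b = star bt dinv"
  proof (rule conv_inv_eq[of b, OF b0])
    show "conv b (star bt dinv) = counitCK"
      unfolding assms(4) using star_conv[of bt delta dinv, OF am] conv_delta_dinv star_counit[of bt, OF bt0] by metis
    show "conv (star bt dinv) b = counitCK"
      unfolding assms(4) using star_conv[of bt dinv delta, OF am] conv_dinv_delta star_counit[of bt, OF bt0] by metis
  qed
  then show ?thesis using d by simp
qed

end
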